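(* There is an absolute constant $c>0$ such that for any $n>16$, any $\eta>0$, and any estimator $\hat\pi$ mapping $n$ i.i.d. action-reward pairs to a distribution in $\Delta(\mathcal A)$, $$\sup_{(\mathcal A,r,\pi^{\mathrm{ref}})\in\mathrm{MAB}_2}\ \mathbb E_{\mathcal D\sim P_{\pi^{\mathrm{ref}},r}}\big[\mathrm{SubOpt}(\hat\pi;\mathcal A,r,\pi^{\mathrm{ref}})\big]\ \ge\ c\,\Big(\frac{\eta}{n}\wedge\frac{1}{\sqrt n}\Big).$$
   Context: $\mathrm{MAB}_2$ denotes the class of offline two-armed bandits: action set $\mathcal A$ with $|\mathcal A|=2$ (single context), mean reward $r:\mathcal A\to[0,1]$, reference (behavior) policy $\pi^{\mathrm{ref}}\in\Delta(\mathcal A)$ with full support. The dataset $\mathcal D\sim P_{\pi^{\mathrm{ref}},r}$ consists of $n$ i.i.d. pairs $(a_i,r_i)$ with $a_i\sim\pi^{\mathrm{ref}}$ and $r_i=r(a_i)+\varepsilon_i$ with mean-zero $1$-subgaussian noise. For $\eta>0$, $J(\pi)=\sum_a r(a)\pi(a)-\eta^{-1}\mathrm{KL}(\pi^{\mathrm{ref}}\|\pi)$, $\pi^*=\arg\max_{\pi\in\Delta(\mathcal A)}J(\pi)$, $\mathrm{SubOpt}(\pi;\mathcal A,r,\pi^{\mathrm{ref}})=J(\pi^* )-J(\pi)$. *)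

theory Defs
  imports "HOL-Probability.Probability"
begin

text \<open>Two-armed bandit: the action set is the two-element type bool.
 Policies are functions bool => real lying in the probability policies.\<close>

definition policies :: "(bool \<Rightarrow> real) set" where
  "policies = {p. (\<forall>a. 0 \<le> p a) \<and> (\<Sum>a\<in>UNIV. p a) = 1}"

definition KL :: "(bool \<Rightarrow> real) \<Rightarrow> (bool \<Rightarrow> real) \<Rightarrow> ereal" where
  "KL pref p = (if (\<forall>a. 0 < pref a \<longrightarrow> 0 < p a)
      then ereal (\<Sum>a\<in>UNIV. if pref a = 0 then 0 else pref a * ln (pref a / p a))
      else \<infinity>)"

definition J :: "real \<Rightarrow> (bool \<Rightarrow> real) \<Rightarrow> (bool \<Rightarrow> real) \<Rightarrow> (bool \<Rightarrow> real) \<Rightarrow> ereal" where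
  "J \<eta> r pref p = ereal (\<Sum>a\<in>UNIV. r a * p a) - KL pref p / ereal \<eta>"

definition SubOpt :: "real \<Rightarrow> (bool \<Rightarrow> real) \<Rightarrow> (bool \<Rightarrow> real) \<Rightarrow> (bool \<Rightarrow> real) \<Rightarrow> ennreal" where
  "SubOpt \<eta> r pref p = e2ennreal ((SUP q\<in>policies. J \<eta> r pref q) - J \<eta> r pref p)"

definition subgaussian_noise :: "real measure \<Rightarrow> bool" where
  "subgaussian_noise \<nu> \<longleftrightarrow> prob_space \<nu> \<and> sets \<nu> = sets borel \<and>
     integrable \<nu> (\<lambda>x. x) \<and> (\<integral>x. x \<partial>\<nu>) = 0 \<and>
     (\<forall>l::real. integrable \<nu> (\<lambda>x. exp (l * x)) \<and> (\<integral>x. exp (l * x) \<partial>\<nu>) \<le> exp (l\<^sup>2 / 2))"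

definition MAB2 :: "((bool \<Rightarrow> real) \<times> (bool \<Rightarrow> real) \<times> real measure) set" where
  "MAB2 = {(r, pref, \<nu>). (\<forall>a. 0 \<le> r a \<and> r a \<le> 1) \<and> pref \<in> policies \<and> (\<forall>a. 0 < pref a)
            \<and> subgaussian_noise \<nu>}"

definition sample_space :: "(bool \<times> real) measure" where
  "sample_space = count_space UNIV \<Otimes>\<^sub>M borel"

definition sample_measure :: "(bool \<Rightarrow> real) \<Rightarrow> (bool \<Rightarrow> real) \<Rightarrow> real measure \<Rightarrow> (bool \<times> real) measure" where
  "sample_measure r pref \<nu> =
     distr (density (count_space UNIV) (\<lambda>a. ennreal (pref a)) \<Otimes>\<^sub>M \<nu>) sample_space
           (\<lambda>(a, e). (a, r a + e))"

definition data_measure :: "nat \<Rightarrow> (bool \<Rightarrow> real) \<Rightarrow> (bool \<Rightarrow> real) \<Rightarrow> real measure \<Rightarrow> (nat \<Rightarrow> bool \<times> real) measure" where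
  "data_measure n r pref \<nu> = PiM {..<n} (\<lambda>_. sample_measure r pref \<nu>)"

definition estimator :: "nat \<Rightarrow> ((nat \<Rightarrow> bool \<times> real) \<Rightarrow> (bool \<Rightarrow> real)) \<Rightarrow> bool" where
  "estimator n pihat \<longleftrightarrow> (\<forall>D. pihat D \<in> policies) \<and>
     (\<forall>a. (\<lambda>D. pihat D a) \<in> borel_measurable (PiM {..<n} (\<lambda>_. sample_space)))"

end

theory Submission
  imports Defs
begin


lemma ln_lower2:
  fixes u :: real assumes "0 \<le> u" shows "u - u^2/2 \<le> ln (1+u)"
proof -
  let ?f = "\<lambda>x::real. ln (1+x) - x + x^2/2"
  have "?f 0 \<le> ?f u"
  proof (rule DERIV_nonneg_imp_increasing_open[OF assms])
    fix x :: real assume x: "0 < x" "x < u"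
    have "DERIV ?f x :> (1/(1+x) - 1 + x)"
      using x by (auto intro!: derivative_eq_intros)
    moreover have "1/(1+x) - 1 + x \<ge> 0"
      using x by (simp add: field_simps power2_eq_square)
    ultimately show "\<exists>y. DERIV ?f x :> y \<and> 0 \<le> y" by blast
  next
    show "continuous_on {0..u} ?f"
      by (intro continuous_intros) auto
  qed
  then show ?thesis by simp
qed

lemma sq_aux: "(y::real) \<noteq> 0 \<Longrightarrow> (1 + 1/(y*y))/2 - 1/y = (1 - 1/y)^2/2"
  by (simp add: field_simps power2_eq_square)

lemma ln_upper2:
  fixes u :: real assumes "0 \<le> u" shows "ln (1+u) \<le> ((1+u) - 1/(1+u))/2"
proof -
  let ?f = "\<lambda>x::real. ((1+x) - 1/(1+x))/2 - ln (1+x)"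
  have "?f 0 \<le> ?f u"
  proof (rule DERIV_nonneg_imp_increasing_open[OF assms])
    fix x :: real assume x: "0 < x" "x < u"
    have "DERIV ?f x :> ((1 + 1/((1+x)*(1+x)))/2 - 1/(1+x))"
      using x by (auto intro!: derivative_eq_intros)
    moreover have "(1 + 1/((1+x)*(1+x)))/2 - 1/(1+x) = (1 - 1/(1+x))^2/2"
      using x sq_aux[of "1+x"] by simp
    ultimately show "\<exists>y. DERIV ?f x :> y \<and> 0 \<le> y" by fastforce
  next
    show "continuous_on {0..u} ?f"
      by (intro continuous_intros) auto
  qed
  then show ?thesis by simp
qed


definition Kf :: "real \<Rightarrow> real \<Rightarrow> real" where
  "Kf d p = d * ln (d/p) + (1-d) * ln ((1-d)/(1-p))"

lemma ln_ge_one_minus_inv: "0 < x \<Longrightarrow> 1 - 1/x \<le> ln (x::real)"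
  using ln_le_minus_one[of "1/x"] by (simp add: ln_div)

lemma Kf_parts:
  fixes d p :: real
  assumes "0 < d" "d < 1" "0 < p" "p < 1"
  shows "d - p \<le> d * ln (d/p)" "p - d \<le> (1-d) * ln ((1-d)/(1-p))"
proof -
  have "1 - p/d \<le> ln (d/p)" using ln_ge_one_minus_inv[of "d/p"] assms by simp
  then have "d * (1 - p/d) \<le> d * ln (d/p)" using assms by (intro mult_left_mono) auto
  then show "d - p \<le> d * ln (d/p)" using assms by (simp add: algebra_simps)
  have "1 - (1-p)/(1-d) \<le> ln ((1-d)/(1-p))" using ln_ge_one_minus_inv[of "(1-d)/(1-p)"] assms by simp
  then have "(1-d) * (1 - (1-p)/(1-d)) \<le> (1-d) * ln ((1-d)/(1-p))" using assms by (intro mult_left_mono) auto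
  moreover have "(1-d) * (1 - (1-p)/(1-d)) = p - d" using assms by (simp add: field_simps)
  ultimately show "p - d \<le> (1-d) * ln ((1-d)/(1-p))" by simp
qed

lemma Kf_nonneg:
  assumes "0 < d" "d < 1" "0 < p" "p < 1"
  shows "0 \<le> Kf d p"
  using Kf_parts[OF assms] unfolding Kf_def by linarith

lemma Kf_lower:
  assumes "0 < d" "d < p" "p < 1"
  shows "(p-d)^2/(2*p) \<le> Kf d p"
proof -
  have u: "0 \<le> p/d - 1" using assms by (simp add: field_simps)
  have "ln (p/d) \<le> (p/d - d/p)/2"
    using ln_upper2[OF u] assms by simp
  moreover have "ln (d/p) = - ln (p/d)" using assms by (simp add: ln_div)
  ultimately have "d * ln (d/p) \<ge> d * (-(p/d - d/p)/2)"
    using assms by (intro mult_left_mono) auto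
  moreover have "d * (-(p/d - d/p)/2) = d - p + (p-d)^2/(2*p)"
    using assms by (simp add: field_simps power2_eq_square)
  ultimately show ?thesis using Kf_parts(2)[of d p] assms unfolding Kf_def by linarith
qed

lemma Kf_upper:
  assumes "0 < d" "d \<le> 1/4" "0 \<le> t" "t \<le> 1/4"
  shows "Kf d (d+t) \<le> t^2/(2*d) + 4*t^2"
proof -
  have "t/d - (t/d)^2/2 \<le> ln (1 + t/d)" using ln_lower2[of "t/d"] assms by simp
  moreover have "ln (d/(d+t)) = - ln (1 + t/d)"
    using assms by (simp add: ln_div add_divide_distrib[symmetric] field_simps)
  ultimately have "d * ln (d/(d+t)) \<le> d * (-(t/d - (t/d)^2/2))"
    using assms by (intro mult_left_mono) auto
  also have "\<dots> = -t + t^2/(2*d)" using assms by (simp add: field_simps power2_eq_square)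
  finally have A: "d * ln (d/(d+t)) \<le> -t + t^2/(2*d)" .
  define w where "w = t/(1-d)"
  have w: "0 \<le> w" "w \<le> 1/2" using assms unfolding w_def by (auto simp: field_simps)
  have "- w - 2 * w^2 \<le> ln (1 - w)" by (rule ln_one_minus_pos_lower_bound[OF w])
  moreover have "ln ((1-d)/(1-(d+t))) = - ln (1 - w)"
    using assms unfolding w_def by (simp add: ln_div field_simps)
  ultimately have "(1-d) * ln ((1-d)/(1-(d+t))) \<le> (1-d) * (w + 2*w^2)"
    using assms by (intro mult_left_mono) auto
  also have "\<dots> = t + 2*t*w"
  proof -
    have e: "(1-d)*w = t" using assms unfolding w_def by simp
    have "(1-d)*(w + 2*w^2) = (1-d)*w + 2*w*((1-d)*w)" by (simp add: algebra_simps power2_eq_square)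
    also have "\<dots> = t + 2*w*t" by (simp only: e)
    finally show ?thesis by simp
  qed
  also have "\<dots> \<le> t + 4*t^2"
  proof -
    have "2*d*t \<le> 1*t" using assms by (intro mult_right_mono) auto
    then have "w \<le> 2*t" using assms unfolding w_def by (simp add: field_simps)
    then have "2*t*w \<le> 2*t*(2*t)" using assms by (intro mult_left_mono) auto
    then show ?thesis by (simp add: power2_eq_square)
  qed
  finally show ?thesis using A unfolding Kf_def by linarith
qed


lemma gapA_B:
  fixes d eta R p :: real
  assumes d: "0 < d" "d \<le> 1/32" and eta: "0 < eta" and R: "0 < R" "R*eta \<le> 1/5"
    and p: "0 < p" "p < 1"
  shows "- R*d - 5/16*R^2*eta*d \<le> - R*p + 2*Kf d p/eta"
proof (cases "p \<le> d")
  case True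
  have "0 \<le> Kf d p" using Kf_nonneg[of d p] d p by auto
  then have "0 \<le> 2*Kf d p/eta" using eta by simp
  moreover have "R*p \<le> R*d" using True R by (intro mult_left_mono) auto
  moreover have "0 \<le> 5/16*R^2*eta*d" using R eta d by simp
  ultimately show ?thesis by linarith
next
  case False
  then have pd: "d < p" by simp
  have L: "(p-d)^2/(2*p) \<le> Kf d p" using Kf_lower[of d p] d p pd by simp
  have L2: "(p-d)^2/(eta*p) \<le> 2*Kf d p/eta"
  proof -
    have "(p-d)^2/(eta*p) = 2*((p-d)^2/(2*p))/eta" using p eta by (simp add: field_simps)
    also have "\<dots> \<le> 2*Kf d p/eta" using L eta by (intro divide_right_mono mult_left_mono) auto
    finally show ?thesis .
  qed
  show ?thesis
  proof (cases "p - d \<le> d/4")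
    case True
    have f1: "(p-d)^2/(eta*(5*d/4)) \<le> (p-d)^2/(eta*p)"
      using True pd d eta by (intro divide_left_mono mult_left_mono mult_pos_pos) auto
    have f2: "(p-d)^2/(eta*(5*d/4)) - (R*p - R*d) + 5/16*R^2*eta*d
        = 4/(5*eta*d) * ((p-d) - 5*R*eta*d/8)^2"
      using d eta by (simp add: field_simps power2_eq_square)
    have f3: "0 \<le> 4/(5*eta*d) * ((p-d) - 5*R*eta*d/8)^2" using d eta by simp
    have lin: "\<And>(E::real) (F::real) (G::real) (H::real) (Z::real) (Kp::real). E \<le> F \<Longrightarrow> E - H + Z = G \<Longrightarrow> 0 \<le> G \<Longrightarrow> F \<le> Kp
       \<Longrightarrow> - Z \<le> - H + Kp" by linarith
    have "- (5/16*R^2*eta*d) \<le> - (R*p - R*d) + 2*Kf d p/eta" by (rule lin[OF f1 f2 f3 L2])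
    then show ?thesis by linarith
  next
    case False
    have q: "1/5 \<le> (p-d)/p" using False pd d p by (simp add: field_simps)
    have "(p-d)^2/(eta*p) = (p-d) * ((p-d)/p) / eta" using p eta by (simp add: field_simps power2_eq_square)
    also have "\<dots> \<ge> (p-d) * (1/5) / eta"
      using q pd eta by (intro divide_right_mono mult_left_mono) auto
    finally have "(p-d)/(5*eta) \<le> (p-d)^2/(eta*p)" by simp
    moreover have "R*(p-d) \<le> (p-d)/(5*eta)"
    proof -
      have "R \<le> 1/(5*eta)" using R eta by (simp add: field_simps)
      then have "R*(p-d) \<le> (1/(5*eta))*(p-d)" using pd by (intro mult_right_mono) auto
      then show ?thesis by simp
    qed
    ultimately have "R*(p-d) \<le> 2*Kf d p/eta" using L2 by linarith
    moreover have "0 \<le> 5/16*R^2*eta*d" using R eta d by simp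
    ultimately show ?thesis by (simp add: algebra_simps)
  qed
qed

lemma gapA:
  fixes d eta R p :: real
  assumes d: "0 < d" "d \<le> 1/32" and eta: "0 < eta" and R: "0 < R" "R*eta \<le> 1/5"
    and p: "0 < p" "p < 1"
  shows "R^2*eta*d/32 \<le> (R*(d + R*eta*d/2) - Kf d (d + R*eta*d/2)/eta) - R*p + 2*Kf d p/eta"
proof -
  define t where "t = R*eta*d/2"
  have t: "0 \<le> t" "t \<le> 1/4"
  proof -
    show "0 \<le> t" using d eta R unfolding t_def by simp
    have "R*eta*d \<le> (1/5) * (1/32)" using R d eta by (intro mult_mono) auto
    then show "t \<le> 1/4" unfolding t_def by linarith
  qed
  have U: "Kf d (d+t) \<le> t^2/(2*d) + 4*t^2" using Kf_upper[of d t] d t by simp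
  have U2: "Kf d (d+t)/eta \<le> (t^2/(2*d) + 4*t^2)/eta" using U eta by (simp add: divide_right_mono)
  have U3: "(t^2/(2*d) + 4*t^2)/eta = R^2*eta*d/8 + R^2*eta*d*d"
    using d eta unfolding t_def by (simp add: field_simps power2_eq_square)
  have B: "- R*d - 5/16*R^2*eta*d \<le> - R*p + 2*Kf d p/eta" by (rule gapA_B[OF d eta R p])
  have dd: "R^2*eta*d*d \<le> R^2*eta*d*(1/32)" using d R eta by (intro mult_left_mono) auto
  have eqR: "R*(d+t) = R*d + R^2*eta*d/2" unfolding t_def by (simp add: algebra_simps power2_eq_square)
  have lin: "\<And>(A::real) (B::real) (C::real) (Dk::real) (Z::real) (W::real) (Rd::real) (Bl::real) (Br::real). A = Rd + Z/2 \<Longrightarrow> B \<le> Z/8 + W \<Longrightarrow> Bl \<le> Br \<Longrightarrow> Bl = -Rd - 5/16*Z \<Longrightarrow> Br = -C + Dk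
     \<Longrightarrow> W \<le> Z*(1/32) \<Longrightarrow> Z/32 \<le> A - B - C + Dk" by linarith
  have e5: "- R*d - 5/16*R^2*eta*d = -(R*d) - 5/16*(R^2*eta*d)" by simp
  have e6: "- R*p + 2*Kf d p/eta = -(R*p) + 2*Kf d p/eta" by simp
  show ?thesis unfolding t_def[symmetric] by (rule lin[OF eqR U2[unfolded U3] B e5 e6 dd])
qed

lemma gapB:
  fixes d eta p :: real
  assumes d: "0 < d" "d \<le> 1/32" and eta: "8 \<le> eta" and p: "0 < p" "p < 1"
  shows "1/10 \<le> (3/4 - Kf d (1/2)/eta) + (1-d)/2 - 1 + 2*Kf d p/eta"
proof -
  have K0: "0 \<le> Kf d p" using Kf_nonneg[of d p] d p by auto
  have "d * ln (d/(1/2)) \<le> 0"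
  proof -
    have "ln (d/(1/2)) \<le> 0" using d by simp
    then show ?thesis using d by (simp add: mult_nonneg_nonpos)
  qed
  moreover have "(1-d) * ln ((1-d)/(1-1/2)) \<le> 1"
  proof -
    have "ln ((1-d)/(1-1/2)) \<le> (1-d)/(1-1/2) - 1" using d by (intro ln_le_minus_one) auto
    also have "\<dots> \<le> 1" using d by simp
    finally have "ln ((1-d)/(1-1/2)) \<le> 1" .
    then have "(1-d) * ln ((1-d)/(1-1/2)) \<le> (1-d) * 1" using d by (intro mult_left_mono) auto
    also have "(1-d) * 1 \<le> 1" using d by simp
    finally show ?thesis .
  qed
  ultimately have "Kf d (1/2) \<le> 1" unfolding Kf_def by simp
  then have "Kf d (1/2)/eta \<le> 1/eta" using eta by (simp add: divide_right_mono)
  also have "\<dots> \<le> 1/8" using eta by (simp add: field_simps)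
  finally have k1: "Kf d (1/2)/eta \<le> 1/8" .
  have k2: "0 \<le> 2*Kf d p/eta" using K0 eta by simp
  have lin: "\<And>(X::real) (Y::real) (dd::real). dd \<le> 1/32 \<Longrightarrow> X \<le> 1/8 \<Longrightarrow> 0 \<le> Y \<Longrightarrow> 1/10 \<le> 3/4 - X + (1-dd)/2 - 1 + Y"
    by (simp add: field_simps)
  show ?thesis by (rule lin[OF d(2) k1 k2])
qed



definition prefd :: "real \<Rightarrow> bool \<Rightarrow> real" where
  "prefd d = (\<lambda>a. if a then d else 1 - d)"

lemma sum_bool: "(\<Sum>a\<in>(UNIV::bool set). f a) = f True + f False"
  by (simp add: UNIV_bool add.commute)

lemma policies_D:
  assumes "q \<in> policies"
  shows "q False = 1 - q True" "0 \<le> q True" "q True \<le> 1" "q = (\<lambda>a. if a then q True else 1 - q True)"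
proof -
  have s: "q True + q False = 1" "0 \<le> q True" "0 \<le> q False" using assms unfolding policies_def by (auto simp: sum_bool)
  then show "q False = 1 - q True" "0 \<le> q True" "q True \<le> 1" by auto
  then show "q = (\<lambda>a. if a then q True else 1 - q True)" by (intro ext) auto
qed

lemma policy_mk: "0 \<le> p \<Longrightarrow> p \<le> 1 \<Longrightarrow> (\<lambda>a. if a then p else 1 - p) \<in> policies"
  unfolding policies_def by (auto simp: sum_bool)

lemma J_calc:
  assumes "0 < d" "d < 1" "0 < p" "p < 1" "0 < eta"
  shows "J eta r (prefd d) (\<lambda>a. if a then p else 1 - p) = ereal (r True * p + r False * (1 - p) - Kf d p / eta)"
  using assms unfolding J_def KL_def prefd_def Kf_def by (simp add: sum_bool)

lemma J_inf:
  assumes "0 < d" "d < 1" "p = 0 \<or> p = 1" "0 < eta"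
  shows "J eta r (prefd d) (\<lambda>a. if a then p else 1 - p) = - \<infinity>"
  using assms unfolding J_def KL_def prefd_def by auto

lemma SubOpt_ge:
  assumes "q \<in> policies" "J eta r pref q = ereal a" "J eta r pref p = ereal b"
  shows "ennreal (a - b) \<le> SubOpt eta r pref p"
proof -
  have h: "ereal a \<le> (SUP q\<in>policies. J eta r pref q)" using assms(1,2) by (metis SUP_upper)
  have "ereal a - ereal b \<le> (SUP q\<in>policies. J eta r pref q) - ereal b"
    by (rule ereal_minus_mono[OF h order_refl])
  then have "ereal a - ereal b \<le> (SUP q\<in>policies. J eta r pref q) - J eta r pref p"
    using assms(3) by simp
  then have "ereal (a - b) \<le> (SUP q\<in>policies. J eta r pref q) - J eta r pref p" by simp
  then have "e2ennreal (ereal (a - b)) \<le> SubOpt eta r pref p"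
    unfolding SubOpt_def by (rule e2ennreal_mono)
  then show ?thesis by simp
qed

lemma SubOpt_inf:
  assumes "q \<in> policies" "J eta r pref q = ereal a" "J eta r pref p = - \<infinity>"
  shows "SubOpt eta r pref p = \<top>"
proof -
  have "ereal a \<le> (SUP q\<in>policies. J eta r pref q)" using assms(1,2) by (metis SUP_upper)
  then have "(SUP q\<in>policies. J eta r pref q) - J eta r pref p = \<infinity>"
    using assms(3) by (cases "(SUP q\<in>policies. J eta r pref q)") auto
  then show ?thesis unfolding SubOpt_def by simp
qed

lemma ennreal_add_le: "ennreal (x + y) \<le> ennreal x + ennreal y"
proof -
  have "ennreal (x + y) \<le> ennreal (max 0 x + max 0 y)" by (intro ennreal_leI) auto
  also have "\<dots> = ennreal (max 0 x) + ennreal (max 0 y)" by (rule ennreal_plus) auto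
  also have "\<dots> = ennreal x + ennreal y" by (simp add: ennreal_max_0)
  finally show ?thesis .
qed



lemma gap_pol:
  assumes "q1 \<in> policies" "q2 \<in> policies" "J eta r1 pref q1 = ereal a1" "J eta r2 pref q2 = ereal a2"
    and "J eta r1 pref qq = - \<infinity> \<or> (\<exists>b1 b2. J eta r1 pref qq = ereal b1 \<and> J eta r2 pref qq = ereal b2 \<and> g \<le> (a1 - b1) + (a2 - b2))"
  shows "ennreal g \<le> SubOpt eta r1 pref qq + SubOpt eta r2 pref qq"
  using assms(5)
proof
  assume "J eta r1 pref qq = - \<infinity>"
  then have "SubOpt eta r1 pref qq = \<top>" using SubOpt_inf[OF assms(1,3)] by blast
  then show ?thesis by simp
next
  assume "\<exists>b1 b2. J eta r1 pref qq = ereal b1 \<and> J eta r2 pref qq = ereal b2 \<and> g \<le> (a1 - b1) + (a2 - b2)"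
  then obtain b1 b2 where b: "J eta r1 pref qq = ereal b1" "J eta r2 pref qq = ereal b2" "g \<le> (a1 - b1) + (a2 - b2)" by blast
  have "ennreal g \<le> ennreal ((a1 - b1) + (a2 - b2))" using b(3) by (rule ennreal_leI)
  also have "\<dots> \<le> ennreal (a1 - b1) + ennreal (a2 - b2)" by (rule ennreal_add_le)
  also have "\<dots> \<le> SubOpt eta r1 pref qq + SubOpt eta r2 pref qq"
    using SubOpt_ge[OF assms(1,3) b(1)] SubOpt_ge[OF assms(2,4) b(2)] by (rule add_mono)
  finally show ?thesis .
qed

lemma Kf_self: "0 < d \<Longrightarrow> d < 1 \<Longrightarrow> Kf d d = 0"
  unfolding Kf_def by simp

lemma prefd_eq: "prefd d = (\<lambda>a. if a then d else 1 - d)" unfolding prefd_def ..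

lemma gapA_pol:
  assumes d: "0 < d" "d \<le> 1/32" and eta: "0 < eta" "eta \<le> 8" and qq: "qq \<in> policies"
  shows "ennreal ((1/40)^2*eta*d/32) \<le> SubOpt eta (\<lambda>a. if a then 1/40 else 0) (prefd d) qq
          + SubOpt eta (\<lambda>a. 0) (prefd d) qq"
proof -
  define R :: real where "R = 1/40"
  define p1 where "p1 = d + R*eta*d/2"
  have Reta: "R*eta \<le> 1/5" unfolding R_def using eta by simp
  have p1: "0 < p1" "p1 < 1"
  proof -
    show "0 < p1" unfolding p1_def R_def using d eta by (simp add: add_pos_nonneg)
    have "R*eta*d \<le> (1/5)*(1/32)" using Reta d eta unfolding R_def by (intro mult_mono) auto
    then show "p1 < 1" unfolding p1_def using d by linarith
  qed
  have d1: "d < 1" using d by simp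
  have q1: "(\<lambda>a. if a then p1 else 1 - p1) \<in> policies" using p1 by (intro policy_mk) auto
  have q2: "prefd d \<in> policies" unfolding prefd_eq using d by (intro policy_mk) auto
  have J1: "J eta (\<lambda>a. if a then 1/40 else 0) (prefd d) (\<lambda>a. if a then p1 else 1 - p1)
      = ereal (R*p1 - Kf d p1/eta)"
    using J_calc[OF d(1) d1 p1 eta(1)] unfolding R_def by simp
  have J2: "J eta (\<lambda>a. 0) (prefd d) (prefd d) = ereal 0"
    using J_calc[OF d(1) d1 d(1) d1 eta(1), of "\<lambda>a. 0"] unfolding prefd_eq by (simp add: Kf_self[OF d(1) d1])
  define p where "p = qq True"
  have pi_eq: "qq = (\<lambda>a. if a then p else 1 - p)" using policies_D[OF qq] unfolding p_def by simp
  have p01: "0 \<le> p" "p \<le> 1" using policies_D[OF qq] unfolding p_def by auto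
  show ?thesis unfolding R_def[symmetric]
  proof (rule gap_pol[OF q1 q2 J1[unfolded R_def[symmetric]] J2])
    show "J eta (\<lambda>a. if a then R else 0) (prefd d) qq = - \<infinity> \<or>
      (\<exists>b1 b2. J eta (\<lambda>a. if a then R else 0) (prefd d) qq = ereal b1 \<and> J eta (\<lambda>a. 0) (prefd d) qq = ereal b2 \<and>
        R\<^sup>2 * eta * d / 32 \<le> R * p1 - Kf d p1 / eta - b1 + (0 - b2))"
    proof (cases "p = 0 \<or> p = 1")
      case True
      then show ?thesis unfolding pi_eq using J_inf[OF d(1) d1 True eta(1)] by blast
    next
      case False
      then have pp: "0 < p" "p < 1" using p01 by auto
      have "J eta (\<lambda>a. if a then R else 0) (prefd d) qq = ereal (R*p - Kf d p/eta)"
        unfolding pi_eq using J_calc[OF d(1) d1 pp eta(1)] by simp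
      moreover have "J eta (\<lambda>a. 0) (prefd d) qq = ereal (- (Kf d p/eta))"
        unfolding pi_eq using J_calc[OF d(1) d1 pp eta(1)] by simp
      moreover have "R\<^sup>2 * eta * d / 32 \<le> R * p1 - Kf d p1 / eta - (R*p - Kf d p/eta) + (0 - (- (Kf d p/eta)))"
      proof -
        have R0: "0 < R" by (simp add: R_def)
        have G: "R^2*eta*d/32 \<le> (R*p1 - Kf d p1/eta) - R*p + 2*Kf d p/eta"
          using gapA[OF d eta(1) R0 Reta pp] unfolding p1_def .
        have lin: "\<And>(Z::real) A B C K W. Z \<le> (A - B) - C + W \<Longrightarrow> W = 2*K \<Longrightarrow> Z \<le> A - B - (C - K) + (0 - (- K))"
          by linarith
        have e: "2*Kf d p/eta = 2*(Kf d p/eta)" by simp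
        show ?thesis by (rule lin[OF G e])
      qed
      ultimately show ?thesis by blast
    qed
  qed
qed

lemma gapB_pol:
  assumes d: "0 < d" "d \<le> 1/32" and eta: "8 \<le> eta" and qq: "qq \<in> policies"
  shows "ennreal (1/10) \<le> SubOpt eta (\<lambda>a. if a then 1 else 1/2) (prefd d) qq
          + SubOpt eta (\<lambda>a. if a then 0 else 1/2) (prefd d) qq"
proof -
  have eta0: "0 < eta" using eta by simp
  have d1: "d < 1" using d by simp
  have h: "(0::real) < 1/2" "(1/2::real) < 1" by auto
  have q1: "(\<lambda>a. if a then 1/2 else 1 - 1/2) \<in> policies" by (intro policy_mk) auto
  have q2: "prefd d \<in> policies" unfolding prefd_eq using d by (intro policy_mk) auto
  have J1: "J eta (\<lambda>a. if a then 1 else 1/2) (prefd d) (\<lambda>a. if a then 1/2 else 1 - 1/2)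
      = ereal (3/4 - Kf d (1/2)/eta)"
    using J_calc[OF d(1) d1 h eta0] by simp
  have J2: "J eta (\<lambda>a. if a then 0 else 1/2) (prefd d) (prefd d) = ereal ((1-d)/2)"
    using J_calc[OF d(1) d1 d(1) d1 eta0, of "\<lambda>a. if a then 0 else 1/2"] unfolding prefd_eq
    by (simp add: Kf_self[OF d(1) d1])
  define p where "p = qq True"
  have pi_eq: "qq = (\<lambda>a. if a then p else 1 - p)" using policies_D[OF qq] unfolding p_def by simp
  have p01: "0 \<le> p" "p \<le> 1" using policies_D[OF qq] unfolding p_def by auto
  show ?thesis
  proof (rule gap_pol[OF q1 q2 J1 J2])
    show "J eta (\<lambda>a. if a then 1 else 1/2) (prefd d) qq = - \<infinity> \<or>
      (\<exists>b1 b2. J eta (\<lambda>a. if a then 1 else 1/2) (prefd d) qq = ereal b1 \<and> J eta (\<lambda>a. if a then 0 else 1/2) (prefd d) qq = ereal b2 \<and>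
        1/10 \<le> (3/4 - Kf d (1/2)/eta) - b1 + ((1-d)/2 - b2))"
    proof (cases "p = 0 \<or> p = 1")
      case True
      then show ?thesis unfolding pi_eq using J_inf[OF d(1) d1 True eta0] by blast
    next
      case False
      then have pp: "0 < p" "p < 1" using p01 by auto
      have "J eta (\<lambda>a. if a then 1 else 1/2) (prefd d) qq = ereal (p + (1-p)/2 - Kf d p/eta)"
        unfolding pi_eq using J_calc[OF d(1) d1 pp eta0] by simp
      moreover have "J eta (\<lambda>a. if a then 0 else 1/2) (prefd d) qq = ereal ((1-p)/2 - Kf d p/eta)"
        unfolding pi_eq using J_calc[OF d(1) d1 pp eta0] by simp
      moreover have "1/10 \<le> (3/4 - Kf d (1/2)/eta) - (p + (1-p)/2 - Kf d p/eta) + ((1-d)/2 - ((1-p)/2 - Kf d p/eta))"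
      proof -
        have lin: "\<And>(X::real) (Z::real) (W::real). 1/10 \<le> (3/4 - X) + (1-d)/2 - 1 + W \<Longrightarrow> W = 2*Z
          \<Longrightarrow> 1/10 \<le> (3/4 - X) - (p + (1-p)/2 - Z) + ((1-d)/2 - ((1-p)/2 - Z))"
          by (simp add: field_simps)
        have e: "2*Kf d p/eta = 2*(Kf d p/eta)" by simp
        show ?thesis by (rule lin[OF gapB[OF d eta pp] e])
      qed
      ultimately show ?thesis by blast
    qed
  qed
qed


lemma prob_N:
  assumes "0 < d" "d < 1"
  shows "prob_space (density (count_space UNIV) (\<lambda>a. ennreal (prefd d a)))"
    and "emeasure (density (count_space UNIV) (\<lambda>a. ennreal (prefd d a))) {False} = ennreal (1 - d)"
proof -
  have "emeasure (density (count_space UNIV) (\<lambda>a. ennreal (prefd d a))) UNIV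
      = (\<integral>\<^sup>+ x. ennreal (prefd d x) * indicator UNIV x \<partial>count_space UNIV)"
    by (rule emeasure_density) auto
  also have "\<dots> = ennreal d + ennreal (1 - d)"
    by (subst nn_integral_count_space_finite) (auto simp: sum_bool prefd_def)
  also have "\<dots> = 1" using assms by (subst ennreal_plus[symmetric]) auto
  finally show "prob_space (density (count_space UNIV) (\<lambda>a. ennreal (prefd d a)))"
    by (intro prob_spaceI) simp
  have "emeasure (density (count_space UNIV) (\<lambda>a. ennreal (prefd d a))) {False}
      = (\<integral>\<^sup>+ x. ennreal (prefd d x) * indicator {False} x \<partial>count_space UNIV)"
    by (rule emeasure_density) auto
  also have "\<dots> = ennreal (1 - d)"
    by (subst nn_integral_count_space_finite) (auto simp: sum_bool prefd_def)
  finally show "emeasure (density (count_space UNIV) (\<lambda>a. ennreal (prefd d a))) {False} = ennreal (1 - d)" .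
qed

lemma data_lb:
  fixes r :: "bool \<Rightarrow> real" and f :: "(nat \<Rightarrow> bool \<times> real) \<Rightarrow> ennreal"
  assumes d: "0 < d" "d < 1"
  shows "ennreal ((1-d)^n) * f (\<lambda>i. if i < n then (False, r False) else undefined)
    \<le> (\<integral>\<^sup>+ D. f D \<partial>(data_measure n r (prefd d) (return borel 0)))"
proof -
  define N where "N = density (count_space UNIV) (\<lambda>a. ennreal (prefd d a))"
  define Q where "Q = return borel (0::real)"
  define g where "g = (\<lambda>(a::bool, e::real). (a, r a + e))"
  define M where "M = sample_measure r (prefd d) (return borel 0)"
  define A0 where "A0 = {(False, r False)}"
  define D0 where "D0 = (\<lambda>i. if i < n then (False, r False) else undefined)"
  have PN: "prob_space N" unfolding N_def by (rule prob_N[OF d])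
  have PQ: "prob_space Q" unfolding Q_def by (rule prob_space_return) simp
  have PNQ: "prob_space (N \<Otimes>\<^sub>M Q)" by (rule prob_space_pair[OF PN PQ])
  have gm: "g \<in> measurable (N \<Otimes>\<^sub>M Q) sample_space"
  proof -
    have "g \<in> measurable (count_space UNIV \<Otimes>\<^sub>M borel) (count_space UNIV \<Otimes>\<^sub>M borel)"
    proof -
      have r: "r \<in> count_space UNIV \<rightarrow>\<^sub>M borel" by simp
      have h2: "(\<lambda>x. r (fst x) + snd x) \<in> borel_measurable (count_space UNIV \<Otimes>\<^sub>M borel)"
        by (intro borel_measurable_add measurable_compose[OF measurable_fst r] measurable_snd)
      have "g = (\<lambda>x. (fst x, r (fst x) + snd x))" unfolding g_def by (auto simp: case_prod_beta)
      then show ?thesis using measurable_Pair[OF measurable_fst h2] by simp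
    qed
    moreover have SS: "sets (N \<Otimes>\<^sub>M Q) = sets (count_space UNIV \<Otimes>\<^sub>M borel)"
      unfolding N_def Q_def by (rule sets_pair_measure_cong[OF sets_density sets_return])
    have "measurable (N \<Otimes>\<^sub>M Q) sample_space = measurable (count_space UNIV \<Otimes>\<^sub>M borel) (count_space UNIV \<Otimes>\<^sub>M borel)"
      unfolding sample_space_def by (rule measurable_cong_sets[OF SS refl])
    ultimately show ?thesis by simp
  qed
  have M_eq: "M = distr (N \<Otimes>\<^sub>M Q) sample_space g"
    unfolding M_def sample_measure_def N_def Q_def g_def ..
  have PM: "prob_space M" unfolding M_eq by (rule prob_space.prob_space_distr[OF PNQ gm])
  have sM: "sets M = sets sample_space" unfolding M_eq by simp
  have A0s: "A0 \<in> sets sample_space"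
  proof -
    have "{False} \<times> {r False} \<in> sets (count_space UNIV \<Otimes>\<^sub>M borel)" by (rule pair_measureI) auto
    then show ?thesis unfolding A0_def sample_space_def by simp
  qed
  have pre: "g -` A0 \<inter> space (N \<Otimes>\<^sub>M Q) = {False} \<times> {0}"
    unfolding g_def A0_def N_def Q_def by (auto simp: space_pair_measure)
  have "emeasure M A0 = emeasure (N \<Otimes>\<^sub>M Q) ({False} \<times> {0})"
    unfolding M_eq using emeasure_distr[OF gm A0s] pre by simp
  also have "\<dots> = emeasure N {False} * emeasure Q {0}"
  proof -
    interpret Q: sigma_finite_measure Q by (rule prob_space_imp_sigma_finite[OF PQ])
    show ?thesis by (rule Q.emeasure_pair_measure_Times) (auto simp: N_def Q_def)
  qed
  also have "\<dots> = ennreal (1 - d)" using prob_N(2)[OF d] unfolding N_def Q_def by simp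
  finally have MA0: "emeasure M A0 = ennreal (1 - d)" .
  interpret PS: product_sigma_finite "\<lambda>_. M"
    unfolding product_sigma_finite_def using prob_space_imp_sigma_finite[OF PM] by simp
  have Es: "Pi\<^sub>E {..<n} (\<lambda>_. A0) \<in> sets (PiM {..<n} (\<lambda>_. M))"
    using A0s sM by (intro sets_PiM_I_finite) auto
  have "emeasure (PiM {..<n} (\<lambda>_. M)) (Pi\<^sub>E {..<n} (\<lambda>_. A0)) = (\<Prod>i\<in>{..<n}. emeasure M A0)"
    using A0s sM by (intro PS.emeasure_PiM) auto
  also have "\<dots> = ennreal ((1-d)^n)" using MA0 d by (simp add: ennreal_power)
  finally have EP: "emeasure (PiM {..<n} (\<lambda>_. M)) (Pi\<^sub>E {..<n} (\<lambda>_. A0)) = ennreal ((1-d)^n)" .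
  have "(\<integral>\<^sup>+ D. f D0 * indicator (Pi\<^sub>E {..<n} (\<lambda>_. A0)) D \<partial>(PiM {..<n} (\<lambda>_. M)))
      \<le> (\<integral>\<^sup>+ D. f D \<partial>(PiM {..<n} (\<lambda>_. M)))"
  proof (rule nn_integral_mono)
    fix D assume "D \<in> space (PiM {..<n} (\<lambda>_. M))"
    show "f D0 * indicator (Pi\<^sub>E {..<n} (\<lambda>_. A0)) D \<le> f D"
    proof (cases "D \<in> Pi\<^sub>E {..<n} (\<lambda>_. A0)")
      case True
      then have "D = D0" unfolding D0_def A0_def by (auto simp: PiE_iff extensional_def)
      then show ?thesis using True by simp
    qed simp
  qed
  moreover have "(\<integral>\<^sup>+ D. f D0 * indicator (Pi\<^sub>E {..<n} (\<lambda>_. A0)) D \<partial>(PiM {..<n} (\<lambda>_. M)))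
      = f D0 * ennreal ((1-d)^n)"
    using nn_integral_cmult_indicator[OF Es] EP by simp
  ultimately show ?thesis unfolding data_measure_def M_def[symmetric] D0_def[symmetric]
    by (simp add: mult.commute)
qed

lemma noise_ok: "subgaussian_noise (return borel (0::real))"
proof -
  have int: "integrable (return borel (0::real)) f" if "f \<in> borel_measurable borel" for f :: "real \<Rightarrow> real"
  proof (rule integrableI_bounded)
    show "f \<in> borel_measurable (return borel 0)" using that by simp
    have "(\<integral>\<^sup>+ x. ennreal (norm (f x)) \<partial>return borel 0) = ennreal (norm (f 0))"
      using that by (subst nn_integral_return) auto
    then show "(\<integral>\<^sup>+ x. ennreal (norm (f x)) \<partial>return borel 0) < \<infinity>" by simp
  qed
  show ?thesis unfolding subgaussian_noise_def
  proof (intro conjI allI)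
    show "prob_space (return borel (0::real))" by (rule prob_space_return) simp
    show "sets (return borel (0::real)) = sets borel" by simp
    show "integrable (return borel (0::real)) (\<lambda>x. x)" by (rule int) simp
    show "(\<integral>x. x \<partial>return borel (0::real)) = 0" by (subst integral_return) auto
    fix l :: real
    show "integrable (return borel (0::real)) (\<lambda>x. exp (l * x))" by (rule int) simp
    have "(\<integral>x. exp (l * x) \<partial>return borel (0::real)) = 1" by (subst integral_return) auto
    also have "(1::real) \<le> exp (l\<^sup>2 / 2)" by simp
    finally show "(\<integral>x. exp (l * x) \<partial>return borel (0::real)) \<le> exp (l\<^sup>2 / 2)" .
  qed
qed

lemma inst_lb:
  fixes r :: "bool \<Rightarrow> real" and pihat :: "(nat \<Rightarrow> bool \<times> real) \<Rightarrow> (bool \<Rightarrow> real)"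
  assumes d: "0 < d" "d < 1" and r: "\<forall>a. 0 \<le> r a \<and> r a \<le> 1"
  shows "ennreal ((1-d)^n) * SubOpt eta r (prefd d) (pihat (\<lambda>i. if i < n then (False, r False) else undefined))
    \<le> (SUP (r, pref, \<nu>)\<in>MAB2. \<integral>\<^sup>+ D. SubOpt eta r pref (pihat D) \<partial>(data_measure n r pref \<nu>))"
proof -
  have "(r, prefd d, return borel 0) \<in> MAB2"
    unfolding MAB2_def using r d noise_ok policy_mk[of d] by (auto simp: prefd_def)
  then have "(\<integral>\<^sup>+ D. SubOpt eta r (prefd d) (pihat D) \<partial>(data_measure n r (prefd d) (return borel 0)))
      \<le> (SUP (r, pref, \<nu>)\<in>MAB2. \<integral>\<^sup>+ D. SubOpt eta r pref (pihat D) \<partial>(data_measure n r pref \<nu>))"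
    by (rule SUP_upper2) auto
  then show ?thesis using data_lb[OF d, of n "\<lambda>D. SubOpt eta r (prefd d) (pihat D)" r] by (rule order_trans[rotated])
qed

lemma two_inst:
  fixes S E1 E2 :: ennreal
  assumes "E1 \<le> S" "E2 \<le> S" "ennreal g \<le> E1 + E2" "0 \<le> g"
  shows "ennreal (g/2) \<le> S"
proof -
  have "E1 + E2 \<le> S + S" using assms(1,2) by (rule add_mono)
  with assms(3) have h: "ennreal g \<le> S + S" by (rule order_trans)
  show ?thesis
  proof (cases S rule: ennreal_cases)
    case (real s)
    have "ennreal s + ennreal s = ennreal (s + s)" using real(1) by (rule ennreal_plus[symmetric]) (use real(1) in simp)
    then have "ennreal g \<le> ennreal (s + s)" using h real(2) by simp
    then have "g \<le> s + s" using real(1) by (subst (asm) ennreal_le_iff) auto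
    then have "ennreal (g/2) \<le> ennreal s" by (intro ennreal_leI) simp
    then show ?thesis using real(2) by simp
  next
    case top
    then show ?thesis by simp
  qed
qed

theorem theoremE3:
  shows "\<exists>c>0. \<forall>n::nat. \<forall>\<eta>::real. \<forall>pihat.
    n > 16 \<longrightarrow> \<eta> > 0 \<longrightarrow> estimator n pihat \<longrightarrow>
    (SUP (r, pref, \<nu>)\<in>MAB2. \<integral>\<^sup>+ D. SubOpt \<eta> r pref (pihat D) \<partial>(data_measure n r pref \<nu>))
      \<ge> ennreal (c * min (\<eta> / real n) (1 / sqrt (real n)))"
proof (intro exI[of _ "1/409600"] conjI allI impI)
  show "(0::real) < 1/409600" by simp
  fix n :: nat and eta :: real and pihat :: "(nat \<Rightarrow> bool \<times> real) \<Rightarrow> (bool \<Rightarrow> real)"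
  assume n: "n > 16" and eta: "eta > 0" and est: "estimator n pihat"
  let ?S = "(SUP (r, pref, \<nu>)\<in>MAB2. \<integral>\<^sup>+ D. SubOpt eta r pref (pihat D) \<partial>(data_measure n r pref \<nu>))"
  define d :: real where "d = 1 / (2 * real n)"
  have nr: "real n \<ge> 17" using n by simp
  have d0: "0 < d" "d \<le> 1/32" "d < 1" unfolding d_def using nr by (auto simp: field_simps)
  have pol: "\<And>D. pihat D \<in> policies" using est unfolding estimator_def by blast
  have bern: "1/2 \<le> (1-d)^n"
  proof -
    have "1 + real n * (-d) \<le> (1 + (-d))^n" using d0 by (intro Bernoulli_inequality) auto
    moreover have "1 + real n * (-d) = 1/2" unfolding d_def using nr by (simp add: field_simps)
    ultimately show ?thesis by simp
  qed
  have key: "ennreal (g/4) \<le> ?S"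
    if g0: "0 \<le> g" and r1: "\<forall>a. 0 \<le> r1 a \<and> r1 a \<le> 1" and r2: "\<forall>a. 0 \<le> r2 a \<and> r2 a \<le> 1"
      and same: "r1 False = r2 False"
      and gap: "\<And>qq. qq \<in> policies \<Longrightarrow> ennreal g \<le> SubOpt eta r1 (prefd d) qq + SubOpt eta r2 (prefd d) qq"
    for g r1 r2
  proof -
    define D0 where "D0 = (\<lambda>i. if i < n then (False, r1 False) else undefined)"
    have E1: "ennreal ((1-d)^n) * SubOpt eta r1 (prefd d) (pihat D0) \<le> ?S"
      unfolding D0_def by (rule inst_lb[OF d0(1) d0(3) r1])
    have E2: "ennreal ((1-d)^n) * SubOpt eta r2 (prefd d) (pihat D0) \<le> ?S"
      unfolding D0_def same by (rule inst_lb[OF d0(1) d0(3) r2])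
    have "(1/2)*g \<le> (1-d)^n * g" by (rule mult_right_mono[OF bern g0])
    then have "g/2 \<le> (1-d)^n * g" by simp
    then have "ennreal (g/2) \<le> ennreal ((1-d)^n * g)" by (rule ennreal_leI)
    also have "\<dots> = ennreal ((1-d)^n) * ennreal g" by (rule ennreal_mult) (use d0 g0 in simp_all)
    also have "\<dots> \<le> ennreal ((1-d)^n) * (SubOpt eta r1 (prefd d) (pihat D0) + SubOpt eta r2 (prefd d) (pihat D0))"
      by (rule mult_left_mono[OF gap[OF pol[of D0]]]) simp
    also have "\<dots> = ennreal ((1-d)^n) * SubOpt eta r1 (prefd d) (pihat D0) + ennreal ((1-d)^n) * SubOpt eta r2 (prefd d) (pihat D0)"
      by (simp add: distrib_left)
    finally have calc: "ennreal (g/2) \<le> ennreal ((1-d)^n) * SubOpt eta r1 (prefd d) (pihat D0) + ennreal ((1-d)^n) * SubOpt eta r2 (prefd d) (pihat D0)" .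
    have "ennreal ((g/2)/2) \<le> ?S" by (rule two_inst[OF E1 E2 calc]) (use g0 in simp)
    then show ?thesis by simp
  qed
  show "ennreal (1/409600 * min (eta / real n) (1 / sqrt (real n))) \<le> ?S"
  proof (cases "eta \<le> 8")
    case True
    have gA: "\<And>qq. qq \<in> policies \<Longrightarrow> ennreal ((1/40)^2*eta*d/32) \<le> SubOpt eta (\<lambda>a. if a then 1/40 else 0) (prefd d) qq + SubOpt eta (\<lambda>a. 0) (prefd d) qq"
      by (rule gapA_pol[OF d0(1) d0(2) eta True])
    have g0: "0 \<le> (1/40)^2*eta*d/32" using eta d0 by simp
    have r1: "\<forall>a. 0 \<le> (\<lambda>a. if a then 1/40 else 0::real) a \<and> (\<lambda>a. if a then 1/40 else 0::real) a \<le> 1" by simp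
    have r2: "\<forall>a. 0 \<le> (\<lambda>a. 0::real) a \<and> (\<lambda>a. 0::real) a \<le> 1" by simp
    have same: "(\<lambda>a. if a then 1/40 else 0::real) False = (\<lambda>a. 0::real) False" by simp
    have A: "ennreal (((1/40)^2*eta*d/32)/4) \<le> ?S"
      by (rule key[OF g0 r1 r2 same gA])
    have B: "1/409600 * min (eta / real n) (1 / sqrt (real n)) \<le> ((1/40)^2*eta*d/32)/4"
    proof -
      have "1/409600 * min (eta / real n) (1 / sqrt (real n)) \<le> 1/409600 * (eta / real n)" by simp
      also have "\<dots> = ((1/40)^2*eta*d/32)/4" unfolding d_def using nr by (simp add: field_simps)
      finally show ?thesis .
    qed
    show ?thesis by (rule order_trans[OF ennreal_leI[OF B] A])
  next
    case False
    have eta8: "8 \<le> eta" using False by simp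
    have gB: "\<And>qq. qq \<in> policies \<Longrightarrow> ennreal (1/10) \<le> SubOpt eta (\<lambda>a. if a then 1 else 1/2) (prefd d) qq + SubOpt eta (\<lambda>a. if a then 0 else 1/2) (prefd d) qq"
      by (rule gapB_pol[OF d0(1) d0(2) eta8])
    have g0: "0 \<le> (1/10::real)" by simp
    have r1: "\<forall>a. 0 \<le> (\<lambda>a. if a then 1 else 1/2::real) a \<and> (\<lambda>a. if a then 1 else 1/2::real) a \<le> 1" by simp
    have r2: "\<forall>a. 0 \<le> (\<lambda>a. if a then 0 else 1/2::real) a \<and> (\<lambda>a. if a then 0 else 1/2::real) a \<le> 1" by simp
    have same: "(\<lambda>a. if a then 1 else 1/2::real) False = (\<lambda>a. if a then 0 else 1/2::real) False" by simp
    have A: "ennreal ((1/10)/4) \<le> ?S"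
      by (rule key[OF g0 r1 r2 same gB])
    have B: "1/409600 * min (eta / real n) (1 / sqrt (real n)) \<le> (1/10)/4"
    proof -
      have "1 / sqrt (real n) \<le> 1" using nr by simp
      then have "min (eta / real n) (1 / sqrt (real n)) \<le> 1" by linarith
      then show ?thesis by simp
    qed
    show ?thesis by (rule order_trans[OF ennreal_leI[OF B] A])
  qed
qed

end
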